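(* Let $X$ be a random variable on a probability space with $X \ge 0$ almost surely and $X \in L^2$ (i.e. $E X^2 < \infty$). Let $0 < r < s \le 1$. Then $$\operatorname{Var}(X^r)^{1/r} \le \operatorname{Var}(X^s)^{1/s}.$$
   Context: $\operatorname{Var}(Y) = E(Y^2) - (EY)^2$ denotes the variance of a square-integrable random variable $Y$. Statements such as $X\ge 0$ are meant almost surely. *)

theory Defs
  imports "HOL-Probability.Probability"
begin

end

theory Submission imports Defs begin
lemma frac_le_powr: fixes x t :: real assumes "0 \<le> x" "x \<le> 1" "0 < t" "t \<le> 1" shows "x \<le> x powr t"
  by (metis assms(1,2,4) powr_mono' powr_one)
lemma subadd_powr: fixes d b t :: real assumes "0 \<le> d" "0 \<le> b" "0 < t" "t \<le> 1"
  shows "(d + b) powr t \<le> d powr t + b powr t"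
proof (cases "d + b = 0")
  case True then show ?thesis using assms by auto
next
  case False
  then have p: "d + b > 0" using assms by auto
  have a1: "d/(d+b) \<le> d powr t/(d+b) powr t" using p assms frac_le_powr[of "d/(d+b)" t] by (simp add: powr_divide)
  have a2: "b/(d+b) \<le> b powr t/(d+b) powr t" using p assms frac_le_powr[of "b/(d+b)" t] by (simp add: powr_divide)
  have "1 = d/(d+b) + b/(d+b)" using p by (simp add: add_divide_distrib[symmetric])
  also have "\<dots> \<le> d powr t/(d+b) powr t + b powr t/(d+b) powr t" using a1 a2 by simp
  also have "\<dots> = (d powr t + b powr t)/(d+b) powr t" by (simp add: add_divide_distrib)
  finally show ?thesis using p by (simp add: le_divide_eq)
qed
lemma pw_bound: fixes x p :: real assumes "0 \<le> x" "0 \<le> p" "p \<le> 2" shows "x powr p \<le> 1 + x^2"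
  by (smt (verit, ccfv_SIG) arith_special(1) arithmetic_simps(1) assms(1,2,3) numeral_eq_one_iff powr_le1 powr_mono powr_numeral
    zero_compare_simps(12))
lemma diff_powr: fixes a b t :: real assumes "0 \<le> a" "0 \<le> b" "0 < t" "t \<le> 1"
  shows "(a powr t - b powr t)^2 \<le> ((a - b)^2) powr t"
proof -
  have "\<bar>a powr t - b powr t\<bar> \<le> \<bar>a - b\<bar> powr t"
  proof (cases "b \<le> a")
    case True
    have "a powr t = ((a - b) + b) powr t" by simp
    also have "\<dots> \<le> (a-b) powr t + b powr t" using True assms by (intro subadd_powr) auto
    finally show ?thesis using True assms powr_mono2[of t b a] by auto
  next
    case False
    have "b powr t = ((b - a) + a) powr t" by simp
    also have "\<dots> \<le> (b-a) powr t + a powr t" using False assms by (intro subadd_powr) auto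
    finally show ?thesis using False assms powr_mono2[of t a b] by auto
  qed
  then have "\<bar>a powr t - b powr t\<bar>^2 \<le> (\<bar>a - b\<bar> powr t)^2"
    by (intro power_mono) auto
  also have "(\<bar>a - b\<bar> powr t)^2 = ((a - b)^2) powr t"
    by (simp add: powr_powr[symmetric] power2_eq_square powr_mult[symmetric])
  finally show ?thesis by simp
qed
lemma pw1: fixes w t :: real assumes "0 \<le> w" "0 < t" "t \<le> 1" shows "w powr t \<le> 1 + w"
  by (smt (verit) assms(1,2,3) powr_mono powr_mono2 powr_one_gt_zero_iff)
lemma young_t: fixes u V t :: real assumes "0 \<le> u" "0 < V" "0 < t" "t < 1"
  shows "u powr t * V powr (1 - t) \<le> t * u + (1 - t) * V"
proof (cases "u = 0")
  case True then show ?thesis using assms by auto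
next
  case False then show ?thesis using Youngs_inequality_0[of t "1-t" u V] assms by auto
qed
lemma (in prob_space) integrable_powr_bound:
  fixes X :: "'a \<Rightarrow> real"
  assumes "X \<in> borel_measurable M" "AE x in M. X x \<ge> 0" "integrable M (\<lambda>x. (X x)\<^sup>2)"
    "0 \<le> p" "p \<le> 2"
  shows "integrable M (\<lambda>x. X x powr p)"
proof (rule Bochner_Integration.integrable_bound[where f="\<lambda>x. 1 + (X x)\<^sup>2"])
  show "integrable M (\<lambda>x. 1 + (X x)\<^sup>2)" using assms by auto
  show "(\<lambda>x. X x powr p) \<in> borel_measurable M" using assms(1) by measurable
  show "AE x in M. norm (X x powr p) \<le> norm (1 + (X x)\<^sup>2)"
    using assms(2) by eventually_elim (use assms pw_bound in auto)
qed

lemma (in prob_space) variance_le_shift: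
  fixes Z :: "'a \<Rightarrow> real"
  assumes "integrable M Z" "integrable M (\<lambda>x. (Z x)\<^sup>2)"
  shows "variance Z \<le> expectation (\<lambda>x. (Z x - a)\<^sup>2)"
proof -
  have "expectation (\<lambda>x. (Z x - a)\<^sup>2) = expectation (\<lambda>x. (Z x)\<^sup>2 - 2 * a * Z x + a\<^sup>2)"
    by (rule arg_cong[where f="integral\<^sup>L M"]) (auto simp: power2_diff fun_eq_iff algebra_simps)
  also have "\<dots> = expectation (\<lambda>x. (Z x)\<^sup>2) - 2 * a * expectation Z + a\<^sup>2"
    using assms prob_space by simp
  finally have "expectation (\<lambda>x. (Z x - a)\<^sup>2) = variance Z + (expectation Z - a)\<^sup>2"
    using variance_eq[OF assms] by (simp add: power2_diff)
  then show ?thesis by simp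
qed

theorem theorem2p1:
  fixes M :: "'a measure" and X :: "'a \<Rightarrow> real" and r s :: real
  assumes "prob_space M"
    and "X \<in> borel_measurable M"
    and "AE x in M. X x \<ge> 0"
    and "integrable M (\<lambda>x. (X x)\<^sup>2)"
    and "0 < r" and "r < s" and "s \<le> 1"
  shows "prob_space.variance M (\<lambda>x. X x powr r) powr (1 / r)
           \<le> prob_space.variance M (\<lambda>x. X x powr s) powr (1 / s)"
proof -
  interpret prob_space M by fact
  define t where "t = r / s"
  have t: "0 < t" "t < 1" using assms by (auto simp: t_def)
  define Y where "Y x = X x powr s" for x
  define Z where "Z x = X x powr r" for x
  define m where "m = expectation Y"
  define W where "W x = Y x - m" for x
  have Ymeas: "Y \<in> borel_measurable M" unfolding Y_def using assms(2) by measurable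
  have Yint: "integrable M Y" unfolding Y_def using assms by (intro integrable_powr_bound) auto
  have Zint: "integrable M Z" unfolding Z_def using assms by (intro integrable_powr_bound) auto
  have Y2: "AE x in M. (Y x)^2 = X x powr (2 * s)"
    using assms(3) by eventually_elim (auto simp: Y_def powr_powr[symmetric] power2_eq_square powr_add[symmetric])
  have Z2: "AE x in M. (Z x)^2 = X x powr (2 * r)"
    using assms(3) by eventually_elim (auto simp: Z_def powr_powr[symmetric] power2_eq_square powr_add[symmetric])
  have Y2int: "integrable M (\<lambda>x. (Y x)\<^sup>2)"
    using integrable_cong_AE[OF _ _ Y2] integrable_powr_bound[OF assms(2,3,4), of "2 * s"] assms Ymeas
    by auto
  have Zmeas: "Z \<in> borel_measurable M" unfolding Z_def using assms(2) by measurable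
  have Z2int: "integrable M (\<lambda>x. (Z x)\<^sup>2)"
    using integrable_cong_AE[OF _ _ Z2] integrable_powr_bound[OF assms(2,3,4), of "2 * r"] assms Zmeas
    by auto
  have m0: "0 \<le> m" unfolding m_def Y_def by (rule integral_nonneg_AE) auto
  have W2int: "integrable M (\<lambda>x. (W x)\<^sup>2)"
    unfolding W_def power2_diff using Yint Y2int by auto
  define V where "V = expectation (\<lambda>x. (W x)\<^sup>2)"
  have VY: "variance Y = V" unfolding V_def W_def m_def by simp
  have Wt_int: "integrable M (\<lambda>x. ((W x)\<^sup>2) powr t)"
  proof (rule Bochner_Integration.integrable_bound[where f="\<lambda>x. 1 + (W x)\<^sup>2"])
    show "integrable M (\<lambda>x. 1 + (W x)\<^sup>2)" using W2int by auto
    show "(\<lambda>x. ((W x)\<^sup>2) powr t) \<in> borel_measurable M" unfolding W_def using Ymeas by measurable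
    show "AE x in M. norm (((W x)\<^sup>2) powr t) \<le> norm (1 + (W x)\<^sup>2)"
    proof (intro AE_I2)
      fix x
      have "((W x)\<^sup>2) powr t \<le> 1 + (W x)\<^sup>2"
        using pw1[of "(W x)\<^sup>2" t] t by simp
      then show "norm (((W x)\<^sup>2) powr t) \<le> norm (1 + (W x)\<^sup>2)" by simp
    qed
  qed
  have step1: "variance Z \<le> expectation (\<lambda>x. (Z x - m powr t)\<^sup>2)"
    by (rule variance_le_shift[OF Zint Z2int])
  have pt: "AE x in M. (Z x - m powr t)\<^sup>2 \<le> ((W x)\<^sup>2) powr t"
    using assms(3)
  proof eventually_elim
    case (elim x)
    have "Z x = (Y x) powr t" using elim assms by (simp add: Z_def Y_def powr_powr t_def)
    then show ?case unfolding W_def using diff_powr[of "Y x" m t] elim m0 t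
      by (simp add: Y_def)
  qed
  have step2: "expectation (\<lambda>x. (Z x - m powr t)\<^sup>2) \<le> expectation (\<lambda>x. ((W x)\<^sup>2) powr t)"
    by (intro integral_mono_AE pt Wt_int) (use Zint Z2int in \<open>auto simp: power2_diff\<close>)
  have step3: "expectation (\<lambda>x. ((W x)\<^sup>2) powr t) \<le> V powr t"
  proof (cases "V = 0")
    case True
    have "AE x in M. (W x)\<^sup>2 = 0"
      using integral_nonneg_eq_0_iff_AE[OF W2int] W2int True unfolding V_def by auto
    then have "AE x in M. ((W x)\<^sup>2) powr t = 0" by eventually_elim simp
    then have "expectation (\<lambda>x. ((W x)\<^sup>2) powr t) = 0" by (simp add: integral_eq_zero_AE)
    then show ?thesis using True by simp
  next
    case False
    have "0 \<le> V" unfolding V_def by (rule integral_nonneg_AE) auto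
    with False have Vp: "V > 0" by simp
    have "expectation (\<lambda>x. ((W x)\<^sup>2) powr t) * V powr (1 - t)
          = expectation (\<lambda>x. ((W x)\<^sup>2) powr t * V powr (1 - t))" by simp
    also have "\<dots> \<le> expectation (\<lambda>x. t * (W x)\<^sup>2 + (1 - t) * V)"
      using young_t Vp t W2int Wt_int by (intro integral_mono) auto
    also have "\<dots> = t * V + (1 - t) * V" using W2int prob_space unfolding V_def by simp
    also have "\<dots> = V powr t * V powr (1 - t)" using Vp by (simp add: powr_add[symmetric] algebra_simps)
    finally show ?thesis using Vp by simp
  qed
  have main: "variance Z \<le> (variance Y) powr t" using step1 step2 step3 VY by simp
  have "variance Z powr (1 / r) \<le> ((variance Y) powr t) powr (1 / r)"
    using main assms by (intro powr_mono2) auto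
  also have "\<dots> = variance Y powr (1 / s)" using assms by (simp add: powr_powr t_def)
  finally show ?thesis unfolding Y_def Z_def .
qed
end
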